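(* Let $A$ be a commutative Noetherian ring containing a commutative subring $\mathbb{K}$, and let $y_1,\ldots,y_n\in A$. Let $S=\mathbb{K}[x_1,\ldots,x_n]$, let $\varphi:S\to S$ be a flat $\mathbb{K}$-algebra endomorphism with $\varphi(x_i)=s_ix_i$ for nonzero $s_i\in S$, let $\psi:S\to A$ be the $\mathbb{K}$-algebra homomorphism with $\psi(x_i)=y_i$, and let $\Phi:A\to A$ be a $\mathbb{K}$-algebra homomorphism with $\Phi\circ\psi=\psi\circ\varphi$. Assume that $\Phi$ is flat and that $y_1,\ldots,y_n$ is an $A$-Koszul regular sequence. Then the $\varphi$-Koszul complex $\mathcal{FK}_\bullet(y_1,\ldots,y_n;A)$ is a finite free resolution of $A/I_n$ in the category of left $A[\Theta;\Phi]$-modules, where $I_n=\langle y_1,\ldots,y_n\rangle$.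
   Context: For a commutative ring $B$ and ring endomorphism $\phi$ of $B$, the left skew polynomial ring $B[\Theta;\phi]$ is the ring which is a free left $B$-module with basis $\{\Theta^i\}_{i\geq0}$ and multiplication determined by $\Theta b=\phi(b)\Theta$ for $b\in B$. A sequence $f_1,\dots,f_n$ in a commutative ring $R$ is a Koszul regular sequence if the Koszul complex $K_\bullet(f_1,\ldots,f_n;R)$ is a free resolution of $R/\langle f_1,\dots,f_n\rangle$ (i.e. has homology only in degree $0$). Write $t_i=\psi(s_i)$, so $\Phi(y_i)=t_iy_i$; for $J=\{j_1<\cdots<j_k\}\subseteq\{1,\dots,n\}$ put $t_J=t_{j_1}\cdots t_{j_k}$ ($t_\emptyset=1$) and $\mathbf{e}_J=\mathbf{e}_{j_1}\wedge\cdots\wedge\mathbf{e}_{j_k}$. The complex $\mathcal{FK}_\bullet(y_1,\ldots,y_n;A)$ ($=A\otimes_S\mathcal{FK}_\bullet(x_1,\dots,x_n)$) is: for $0\le l\le n+1$, $\mathcal{FK}_l$ is the free left $A[\Theta;\Phi]$-module with basis $\{\mathbf{e}_I:|I|=l\}\cup\{\mathbf{e}_J\wedge u:|J|=l-1\}$, and $\partial_l:\mathcal{FK}_l\to\mathcal{FK}_{l-1}$ is the left $A[\Theta;\Phi]$-linear map with $\partial_l(\mathbf{e}_I)=\sum_{r=1}^l(-1)^{r-1}y_{i_r}\mathbf{e}_{I\setminus\{i_r\}}$ for $I=\{i_1<\dots<i_l\}$ and $\partial_l(\mathbf{e}_J\wedge u)=(-1)^{l-1}(\Theta-t_J)\mathbf{e}_J+\sum_{r=1}^{l-1}(-1)^{r-1}\Phi(y_{j_r})\mathbf{e}_{J\setminus\{j_r\}}\wedge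 u$ for $J=\{j_1<\dots<j_{l-1}\}$. $A/I_n$ is a left $A[\Theta;\Phi]$-module with $\Theta$ acting by the map induced by $\Phi$ (well defined since $\Phi(I_n)\subseteq I_n$). *)

theory Defs
  imports "HOL-Computational_Algebra.Polynomial" "HOL-Library.Poly_Mapping"
begin

definition is_ideal :: "'a::comm_ring_1 set \<Rightarrow> bool" where
  "is_ideal I \<longleftrightarrow> 0 \<in> I \<and> (\<forall>a\<in>I. \<forall>b\<in>I. a + b \<in> I) \<and> (\<forall>r. \<forall>a\<in>I. r * a \<in> I)"

definition noetherian_ring :: "'a::comm_ring_1 itself \<Rightarrow> bool" where
  "noetherian_ring _ \<longleftrightarrow> (\<forall>I::'a set. is_ideal I \<longrightarrow>
     (\<exists>F. finite F \<and> F \<subseteq> I \<and> I = {\<Sum>f\<in>F. c f * f | c. True}))"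

definition is_subring :: "'a::comm_ring_1 set \<Rightarrow> bool" where
  "is_subring K \<longleftrightarrow> 0 \<in> K \<and> 1 \<in> K \<and> (\<forall>a\<in>K. \<forall>b\<in>K. a + b \<in> K \<and> a - b \<in> K \<and> a * b \<in> K)"

definition ring_hom_on :: "'r::comm_ring_1 set \<Rightarrow> ('r \<Rightarrow> 'm::comm_ring_1) \<Rightarrow> bool" where
  "ring_hom_on R f \<longleftrightarrow> f 1 = 1 \<and>
     (\<forall>a\<in>R. \<forall>b\<in>R. f (a + b) = f a + f b \<and> f (a * b) = f a * f b)"

text \<open>Flatness of a ring homomorphism f : R \<rightarrow> M (M regarded as an R-module via f),
  expressed by the equational criterion of flatness.\<close>
definition flat_hom :: "'r::comm_ring_1 set \<Rightarrow> 'm::comm_ring_1 set \<Rightarrow> ('r \<Rightarrow> 'm) \<Rightarrow> bool" where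
  "flat_hom R M f \<longleftrightarrow>
     (\<forall>(k::nat) (r::nat \<Rightarrow> 'r) (x::nat \<Rightarrow> 'm).
        (\<forall>i<k. r i \<in> R \<and> x i \<in> M) \<and> (\<Sum>i<k. f (r i) * x i) = 0 \<longrightarrow>
        (\<exists>(q::nat) (a::nat \<Rightarrow> nat \<Rightarrow> 'r) (z::nat \<Rightarrow> 'm).
            (\<forall>j<q. z j \<in> M) \<and> (\<forall>i<k. \<forall>j<q. a i j \<in> R) \<and>
            (\<forall>i<k. x i = (\<Sum>j<q. f (a i j) * z j)) \<and>
            (\<forall>j<q. (\<Sum>i<k. r i * a i j) = 0)))"

definition gen_ideal :: "nat \<Rightarrow> (nat \<Rightarrow> 'a::comm_ring_1) \<Rightarrow> 'a set" where
  "gen_ideal n y = {\<Sum>i\<in>{1..n}. a i * y i | a. True}"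

type_synonym 'a mpoly = "(nat \<Rightarrow>\<^sub>0 nat) \<Rightarrow>\<^sub>0 'a"

definition mp_var :: "nat \<Rightarrow> 'a::comm_ring_1 mpoly" where
  "mp_var i = Poly_Mapping.single (Poly_Mapping.single i 1) 1"

definition mp_const :: "'a::comm_ring_1 \<Rightarrow> 'a mpoly" where
  "mp_const c = Poly_Mapping.single 0 c"

definition poly_ring :: "'a::comm_ring_1 set \<Rightarrow> nat \<Rightarrow> 'a mpoly set" where
  "poly_ring K n = {p. (\<forall>m. Poly_Mapping.lookup p m \<in> K) \<and> (\<forall>m\<in>Poly_Mapping.keys p. Poly_Mapping.keys m \<subseteq> {1..n})}"

text \<open>K_l = free A-module with basis e_I, I \<subseteq> {1..n}, |I| = l; elements are coefficient
  functions on subsets.\<close>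
definition kz_mod :: "nat \<Rightarrow> nat \<Rightarrow> (nat set \<Rightarrow> 'a::comm_ring_1) set" where
  "kz_mod n l = {m. \<forall>I. m I \<noteq> 0 \<longrightarrow> I \<subseteq> {1..n} \<and> card I = l}"

text \<open>d(e_I) = \<Sum>_r (-1)^(r-1) y_{i_r} e_{I - i_r}; written via the coefficient of e_K.\<close>
definition kz_d :: "nat \<Rightarrow> (nat \<Rightarrow> 'a::comm_ring_1) \<Rightarrow> (nat set \<Rightarrow> 'a) \<Rightarrow> (nat set \<Rightarrow> 'a)" where
  "kz_d n y m = (\<lambda>K. \<Sum>i\<in>{1..n} - K. (- 1) ^ card {j\<in>K. j < i} * y i * m (insert i K))"

definition koszul_regular :: "nat \<Rightarrow> (nat \<Rightarrow> 'a::comm_ring_1) \<Rightarrow> bool" where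
  "koszul_regular n y \<longleftrightarrow> (\<forall>l\<ge>1. \<forall>m\<in>kz_mod n l. kz_d n y m = (\<lambda>_. 0) \<longrightarrow>
      (\<exists>m'\<in>kz_mod n (Suc l). kz_d n y m' = m))"

text \<open>Elements \<Sum> a_i \<Theta>^i are represented by 'a poly (left coefficients);
  multiplication (a \<Theta>^i)(b \<Theta>^j) = a \<Phi>^i(b) \<Theta>^(i+j).\<close>
definition skmult :: "('a::comm_ring_1 \<Rightarrow> 'a) \<Rightarrow> 'a poly \<Rightarrow> 'a poly \<Rightarrow> 'a poly" where
  "skmult \<Phi> p q = (\<Sum>i\<le>degree p. monom (coeff p i) i * map_poly (\<Phi> ^^ i) q)"

text \<open>Action of A[\<Theta>;\<Phi>] on A (hence on A/I_n): \<Theta> acts by \<Phi>.\<close>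
definition skact :: "('a::comm_ring_1 \<Rightarrow> 'a) \<Rightarrow> 'a poly \<Rightarrow> 'a \<Rightarrow> 'a" where
  "skact \<Phi> c a = (\<Sum>i\<le>degree c. coeff c i * (\<Phi> ^^ i) a)"

text \<open>Basis of FK_l: (I, False) stands for e_I with |I| = l, (J, True) stands for
  e_J \<and> u with |J| = l - 1.  Elements are coefficient functions into A[\<Theta>;\<Phi>].\<close>
definition fk_mod :: "nat \<Rightarrow> nat \<Rightarrow> (nat set \<times> bool \<Rightarrow> 'a::comm_ring_1 poly) set" where
  "fk_mod n l = {m. \<forall>I b. m (I, b) \<noteq> 0 \<longrightarrow> I \<subseteq> {1..n} \<and> card I + (if b then 1 else 0) = l}"

text \<open>The left-linear differential, given by the coefficient of each target basis
  element: coefficient of b' in \<partial>(\<Sum>_b c_b b) is \<Sum>_b c_b * (coefficient of b' in \<partial> b).\<close>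
definition fk_d :: "nat \<Rightarrow> ('a::comm_ring_1 \<Rightarrow> 'a) \<Rightarrow> (nat \<Rightarrow> 'a) \<Rightarrow> (nat \<Rightarrow> 'a)
    \<Rightarrow> (nat set \<times> bool \<Rightarrow> 'a poly) \<Rightarrow> (nat set \<times> bool \<Rightarrow> 'a poly)" where
  "fk_d n \<Phi> y t m = (\<lambda>(K, b).
     if b then
       (\<Sum>j\<in>{1..n} - K. skmult \<Phi> (m (insert j K, True))
                           [: (- 1) ^ card {i\<in>K. i < j} * \<Phi> (y j) :])
     else
       (\<Sum>i\<in>{1..n} - K. skmult \<Phi> (m (insert i K, False))
                           [: (- 1) ^ card {j\<in>K. j < i} * y i :])
       + skmult \<Phi> (m (K, True)) (smult ((- 1) ^ card K) [: - (\<Prod>j\<in>K. t j), 1 :]))"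

text \<open>Augmentation FK_0 = A[\<Theta>;\<Phi>] e_\<emptyset> \<rightarrow> A/I_n, c e_\<emptyset> \<mapsto> c \<cdot> [1] = [\<Sum> c_i];
  we record a representative in A.\<close>
definition fk_aug :: "(nat set \<times> bool \<Rightarrow> 'a::comm_ring_1 poly) \<Rightarrow> 'a" where
  "fk_aug m = poly (m ({}, False)) 1"

end

theory Submission
  imports Defs
begin

locale rh =
  fixes f :: "'a::comm_ring_1 \<Rightarrow> 'a"
  assumes add: "f (a + b) = f a + f b" and mult: "f (a * b) = f a * f b" and one: "f 1 = 1"
begin
lemma zero[simp]: "f 0 = 0"
  using add[of 0 0] by simp
lemma neg: "f (- a) = - f a"
  using add[of a "-a"] by (simp add: add_eq_0_iff2)
lemma diff: "f (a - b) = f a - f b"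
  using add[of a "-b"] neg[of b] by simp
lemma sum: "f (sum g A) = (\<Sum>x\<in>A. f (g x))"
  by (induction A rule: infinite_finite_induct) (auto simp: add)
lemma prod: "f (prod g A) = (\<Prod>x\<in>A. f (g x))"
  by (induction A rule: infinite_finite_induct) (auto simp: mult one)
lemma power: "f (a ^ k) = f a ^ k"
  by (induction k) (auto simp: mult one)
lemma m1pow: "f ((- 1) ^ k) = (- 1) ^ k"
  by (simp add: power neg one)
end

lemma rh_funpow: "rh f \<Longrightarrow> rh (f ^^ k)"
  by (induction k) (auto simp: rh_def)

lemma coeff_skmult:
  assumes "\<And>i. (\<Phi> ^^ i) 0 = 0"
  shows "coeff (skmult \<Phi> p q) k = (\<Sum>i\<le>k. coeff p i * (\<Phi> ^^ i) (coeff q (k - i)))"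
proof -
  have cm: "\<And>i j. coeff (map_poly (\<Phi> ^^ i) q) j = (\<Phi> ^^ i) (coeff q j)"
    using coeff_map_poly assms by metis
  have "coeff (skmult \<Phi> p q) k = (\<Sum>i\<le>degree p. (if k < i then 0 else coeff p i * (\<Phi> ^^ i) (coeff q (k - i))))"
    unfolding skmult_def coeff_sum coeff_monom_mult cm by (rule refl)
  also have "\<dots> = (\<Sum>i\<le>max k (degree p). (if k < i then 0 else coeff p i * (\<Phi> ^^ i) (coeff q (k - i))))"
    by (rule sum.mono_neutral_left) (auto simp: coeff_eq_0)
  also have "\<dots> = (\<Sum>i\<le>k. (if k < i then 0 else coeff p i * (\<Phi> ^^ i) (coeff q (k - i))))"
    by (rule sum.mono_neutral_right) (auto simp: coeff_eq_0)
  also have "\<dots> = (\<Sum>i\<le>k. coeff p i * (\<Phi> ^^ i) (coeff q (k - i)))"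
    by (rule sum.cong) auto
  finally show ?thesis .
qed

lemma coeff_skmult_const:
  assumes "\<And>i. (\<Phi> ^^ i) 0 = 0"
  shows "coeff (skmult \<Phi> p [:a:]) k = coeff p k * (\<Phi> ^^ k) a"
proof -
  have "coeff (skmult \<Phi> p [:a:]) k = (\<Sum>i\<le>k. if i = k then coeff p i * (\<Phi> ^^ i) a else 0)"
    unfolding coeff_skmult[OF assms] by (rule sum.cong) (auto simp: coeff_pCons split: nat.split simp: assms)
  thus ?thesis by simp
qed

lemma coeff_skmult_lin:
  assumes "\<And>i. (\<Phi> ^^ i) 0 = 0"
  shows "coeff (skmult \<Phi> p [:a, b:]) k = coeff p k * (\<Phi> ^^ k) a + (if k = 0 then 0 else coeff p (k - 1) * (\<Phi> ^^ (k - 1)) b)"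
proof -
  have "coeff (skmult \<Phi> p [:a, b:]) k = (\<Sum>i\<le>k. (if i = k then coeff p i * (\<Phi> ^^ i) a else 0)
     + (if Suc i = k then coeff p i * (\<Phi> ^^ i) b else 0))"
    unfolding coeff_skmult[OF assms] by (rule sum.cong) (auto simp: coeff_pCons split: nat.split simp: assms)
  also have "\<dots> = coeff p k * (\<Phi> ^^ k) a + (\<Sum>i\<le>k. if Suc i = k then coeff p i * (\<Phi> ^^ i) b else 0)"
    by (simp add: sum.distrib)
  also have "(\<Sum>i\<le>k. if Suc i = k then coeff p i * (\<Phi> ^^ i) b else 0) = (if k = 0 then 0 else coeff p (k - 1) * (\<Phi> ^^ (k - 1)) b)"
  proof (cases k)
    case (Suc k')
    have "(\<Sum>i\<le>k. if Suc i = k then coeff p i * (\<Phi> ^^ i) b else 0) = (\<Sum>i\<le>k. if i = k' then coeff p i * (\<Phi> ^^ i) b else 0)"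
      using Suc by (intro sum.cong) auto
    thus ?thesis using Suc by simp
  qed simp
  finally show ?thesis .
qed

lemma card_ins_less:
  assumes "i \<notin> K"
  shows "card {x\<in>insert i K. x < (j::nat)} = card {x\<in>K. x < j} + (if i < j then 1 else 0)"
proof -
  have f: "finite {x\<in>K. x < j}" by (rule finite_subset[of _ "{..<j}"]) auto
  show ?thesis
  proof (cases "i < j")
    case True
    hence "{x\<in>insert i K. x < j} = insert i {x\<in>K. x < j}" by auto
    thus ?thesis using True f assms by simp
  next
    case False
    hence "{x\<in>insert i K. x < j} = {x\<in>K. x < j}" by auto
    thus ?thesis using False by simp
  qed
qed

lemma antisym_sum0:
  fixes F :: "nat \<Rightarrow> nat \<Rightarrow> 'a::comm_ring_1"
  assumes "finite A" and anti: "\<And>i j. i\<in>A \<Longrightarrow> j\<in>A \<Longrightarrow> i\<noteq>j \<Longrightarrow> F i j = - F j i"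
  shows "(\<Sum>i\<in>A. \<Sum>j\<in>A-{i}. F i j) = 0"
proof -
  have split: "(\<Sum>j\<in>A-{i}. F i j) = (\<Sum>j\<in>A. if j < i then F i j else 0) + (\<Sum>j\<in>A. if i < j then F i j else 0)" if "i \<in> A" for i
  proof -
    have "(\<Sum>j\<in>A-{i}. F i j) = (\<Sum>j\<in>A. if j = i then 0 else F i j)"
      using assms(1) that by (simp add: sum.If_cases Diff_eq Int_commute)
    also have "\<dots> = (\<Sum>j\<in>A. (if j < i then F i j else 0) + (if i < j then F i j else 0))"
      by (rule sum.cong) auto
    finally show ?thesis by (simp add: sum.distrib)
  qed
  have "(\<Sum>i\<in>A. \<Sum>j\<in>A. if i < j then F i j else 0) = (\<Sum>j\<in>A. \<Sum>i\<in>A. if i < j then F i j else 0)"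
    by (rule sum.swap)
  also have "\<dots> = (\<Sum>i\<in>A. \<Sum>j\<in>A. - (if j < i then F i j else 0))"
    apply (intro sum.cong refl)
    subgoal for i j using anti[of i j] by auto
    done
  finally have e: "(\<Sum>i\<in>A. \<Sum>j\<in>A. if i < j then F i j else 0) = - (\<Sum>i\<in>A. \<Sum>j\<in>A. if j < i then F i j else 0)"
    by (simp add: sum_negf)
  have "(\<Sum>i\<in>A. \<Sum>j\<in>A-{i}. F i j) = (\<Sum>i\<in>A. (\<Sum>j\<in>A. if j < i then F i j else 0) + (\<Sum>j\<in>A. if i < j then F i j else 0))"
    by (rule sum.cong) (auto simp: split)
  also have "\<dots> = 0" using e by (simp add: sum.distrib)
  finally show ?thesis .
qed

lemma kz_dd: "kz_d n z (kz_d n z g) = (\<lambda>_. 0)"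
proof
  fix K
  define A where "A = {1..n} - K"
  define F where "F i j = ((- 1) ^ card {x\<in>K. x < i} * z i) * ((- 1) ^ card {x\<in>insert i K. x < j} * z j * g (insert j (insert i K)))" for i j
  have "kz_d n z (kz_d n z g) K = (\<Sum>i\<in>A. \<Sum>j\<in>A-{i}. F i j)"
    unfolding kz_d_def A_def[symmetric]
  proof (rule sum.cong[OF refl])
    fix i assume "i \<in> A"
    have "{1..n} - insert i K = A - {i}" by (auto simp: A_def)
    thus "(- 1) ^ card {j \<in> K. j < i} * z i * (\<Sum>ia\<in>{1..n} - insert i K. (- 1) ^ card {j \<in> insert i K. j < ia} * z ia * g (insert ia (insert i K))) =
         sum (F i) (A - {i})"
      unfolding F_def sum_distrib_left by (simp only: mult.assoc)
  qed
  also have "\<dots> = 0"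
  proof (rule antisym_sum0)
    show "finite A" by (simp add: A_def)
    fix i j assume "i \<in> A" "j \<in> A" "i \<noteq> j"
    hence "i \<notin> K" "j \<notin> K" by (auto simp: A_def)
    have ij: "insert j (insert i K) = insert i (insert j K)" by auto
    show "F i j = - F j i"
    proof (cases "i < j")
      case True
      have c1: "card {x\<in>insert i K. x < j} = card {x\<in>K. x < j} + 1"
        using card_ins_less[OF \<open>i \<notin> K\<close>, of j] True by simp
      have c2: "card {x\<in>insert j K. x < i} = card {x\<in>K. x < i}"
        using card_ins_less[OF \<open>j \<notin> K\<close>, of i] True by simp
      show ?thesis unfolding F_def ij c1 c2 by (simp add: mult_ac)
    next
      case False
      hence T: "j < i" using \<open>i \<noteq> j\<close> by simp
      have c1: "card {x\<in>insert j K. x < i} = card {x\<in>K. x < i} + 1"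
        using card_ins_less[OF \<open>j \<notin> K\<close>, of i] T by simp
      have c2: "card {x\<in>insert i K. x < j} = card {x\<in>K. x < j}"
        using card_ins_less[OF \<open>i \<notin> K\<close>, of j] T by simp
      show ?thesis unfolding F_def ij c1 c2 by (simp add: mult_ac)
    qed
  qed
  finally show "kz_d n z (kz_d n z g) K = 0" .
qed

lemma rhP: "rh \<Phi> \<Longrightarrow> rh (\<Phi> ^^ k)" by (rule rh_funpow)

lemma P0: "rh \<Phi> \<Longrightarrow> (\<Phi> ^^ k) 0 = 0"
  using rh.zero[OF rhP] by blast

lemma coeff_fk_d_F:
  assumes "rh \<Phi>"
  shows "coeff (fk_d n \<Phi> y t m (K, False)) k =
    kz_d n (\<lambda>i. (\<Phi> ^^ k) (y i)) (\<lambda>I. coeff (m (I, False)) k) K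
    + (- 1) ^ card K * ((if k = 0 then 0 else coeff (m (K, True)) (k - 1)) - coeff (m (K, True)) k * (\<Phi> ^^ k) (\<Prod>j\<in>K. t j))"
proof -
  interpret r: rh "\<Phi> ^^ k" by (rule rhP[OF assms])
  have z: "\<And>i. (\<Phi> ^^ i) 0 = 0" by (rule P0[OF assms])
  have sm: "smult ((- 1) ^ card K) [:- (\<Prod>j\<in>K. t j), 1:] = [:(- 1) ^ card K * - (\<Prod>j\<in>K. t j), (- 1) ^ card K:]"
    by simp
  have pm: "\<And>j. (\<Phi> ^^ j) ((- 1) ^ card K) = (- 1) ^ card K"
    using rh.m1pow[OF rhP[OF assms]] by blast
  show ?thesis
    unfolding fk_d_def kz_d_def
    by (simp add: coeff_sum coeff_skmult_const[OF z] coeff_skmult_lin[OF z] sm pm r.mult r.m1pow r.neg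
      algebra_simps)
qed

lemma coeff_fk_d_T:
  assumes "rh \<Phi>"
  shows "coeff (fk_d n \<Phi> y t m (K, True)) k =
    kz_d n (\<lambda>i. (\<Phi> ^^ Suc k) (y i)) (\<lambda>I. coeff (m (I, True)) k) K"
proof -
  interpret r: rh "\<Phi> ^^ k" by (rule rhP[OF assms])
  have z: "\<And>i. (\<Phi> ^^ i) 0 = 0" by (rule P0[OF assms])
  have s: "\<And>x. (\<Phi> ^^ k) (\<Phi> x) = \<Phi> ((\<Phi> ^^ k) x)" by (simp only: funpow_swap1)
  show ?thesis
    unfolding fk_d_def kz_d_def
    by (simp add: coeff_sum coeff_skmult_const[OF z] s r.mult r.m1pow algebra_simps)
qed

lemma sum_nz: "sum f A \<noteq> 0 \<Longrightarrow> \<exists>a\<in>A. f a \<noteq> 0"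
  by (meson sum.neutral)

lemma skmult_0[simp]: "skmult \<Phi> 0 q = 0"
  by (simp add: skmult_def)

lemma skmult_nz: "skmult \<Phi> p q \<noteq> 0 \<Longrightarrow> p \<noteq> 0"
  by auto

lemma fk_d_mod:
  assumes "m \<in> fk_mod n l"
  shows "fk_d n \<Phi> y t m \<in> fk_mod n (l - 1)"
  unfolding fk_mod_def
proof (intro CollectI allI impI)
  fix I b assume nz: "fk_d n \<Phi> y t m (I, b) \<noteq> 0"
  have mm: "\<And>J c. m (J, c) \<noteq> 0 \<Longrightarrow> J \<subseteq> {1..n} \<and> card J + (if c then 1 else 0) = l"
    using assms unfolding fk_mod_def by blast
  show "I \<subseteq> {1..n} \<and> card I + (if b then 1 else 0) = l - 1"
  proof (cases b)
    case True
    with nz obtain j where j: "j \<in> {1..n} - I" "m (insert j I, True) \<noteq> 0"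
      unfolding fk_d_def by (auto dest!: sum_nz skmult_nz)
    from mm[OF j(2)] j(1) have "I \<subseteq> {1..n}" "card (insert j I) + 1 = l" by auto
    moreover have "finite I" using \<open>I \<subseteq> {1..n}\<close> finite_subset by blast
    ultimately show ?thesis using True j(1) by simp
  next
    case False
    with nz have "(\<exists>j\<in>{1..n} - I. m (insert j I, False) \<noteq> 0) \<or> m (I, True) \<noteq> 0"
      unfolding fk_d_def by (auto dest!: sum_nz skmult_nz)
    thus ?thesis
    proof
      assume "\<exists>j\<in>{1..n} - I. m (insert j I, False) \<noteq> 0"
      then obtain j where j: "j \<in> {1..n} - I" "m (insert j I, False) \<noteq> 0" by blast
      from mm[OF j(2)] j(1) have "I \<subseteq> {1..n}" "card (insert j I) = l" by auto
      moreover have "finite I" using \<open>I \<subseteq> {1..n}\<close> finite_subset by blast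
      ultimately show ?thesis using False j(1) by simp
    next
      assume "m (I, True) \<noteq> 0"
      from mm[OF this] show ?thesis using False by auto
    qed
  qed
qed

lemma kz_d_add: "kz_d n z (\<lambda>I. g1 I + g2 I) K = kz_d n z g1 K + kz_d n z g2 K"
  by (simp add: kz_d_def algebra_simps sum.distrib)

lemma kz_d_diff: "kz_d n z (\<lambda>I. g1 I - g2 I) K = kz_d n z g1 K - kz_d n z g2 K"
  by (simp add: kz_d_def algebra_simps sum_subtractf)

lemma kz_d_zero: "kz_d n z (\<lambda>I. 0) K = 0"
  by (simp add: kz_d_def)

lemma kz_d_cross:
  assumes "rh \<Phi>" and "finite K" and ty: "\<And>i. i \<in> {1..n} \<Longrightarrow> \<Phi> (y i) = t i * y i"
  shows "kz_d n (\<lambda>i. (\<Phi> ^^ k) (y i)) (\<lambda>I. (- 1) ^ card I * (hp I - h I * (\<Phi> ^^ k) (\<Prod>j\<in>I. t j))) K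
     = - ((- 1) ^ card K * (kz_d n (\<lambda>i. (\<Phi> ^^ k) (y i)) hp K
          - (\<Phi> ^^ k) (\<Prod>j\<in>K. t j) * kz_d n (\<lambda>i. (\<Phi> ^^ Suc k) (y i)) h K))"
proof -
  interpret r: rh "\<Phi> ^^ k" by (rule rhP[OF assms(1)])
  let ?s = "\<lambda>i. (- 1) ^ card {j \<in> K. j < i} :: 'a"
  let ?T = "(\<Phi> ^^ k) (\<Prod>j\<in>K. t j)"
  have "kz_d n (\<lambda>i. (\<Phi> ^^ k) (y i)) (\<lambda>I. (- 1) ^ card I * (hp I - h I * (\<Phi> ^^ k) (\<Prod>j\<in>I. t j))) K
     = (\<Sum>i\<in>{1..n} - K. - ((- 1) ^ card K * (?s i * (\<Phi> ^^ k) (y i) * hp (insert i K)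
          - ?T * (?s i * (\<Phi> ^^ Suc k) (y i) * h (insert i K)))))"
    unfolding kz_d_def
  proof (rule sum.cong[OF refl])
    fix i assume i: "i \<in> {1..n} - K"
    have c: "card (insert i K) = Suc (card K)" using i assms(2) by simp
    have p: "(\<Prod>j\<in>insert i K. t j) = t i * (\<Prod>j\<in>K. t j)" using i assms(2) by simp
    have "(\<Phi> ^^ Suc k) (y i) = (\<Phi> ^^ k) (\<Phi> (y i))" by (simp only: funpow_Suc_right comp_def)
    also have "\<dots> = (\<Phi> ^^ k) (t i * y i)" using ty[of i] i by simp
    finally have y: "(\<Phi> ^^ Suc k) (y i) = (\<Phi> ^^ k) (t i) * (\<Phi> ^^ k) (y i)" by (simp only: r.mult)
    show "?s i * (\<Phi> ^^ k) (y i) * ((- 1) ^ card (insert i K) * (hp (insert i K) - h (insert i K) * (\<Phi> ^^ k) (\<Prod>j\<in>insert i K. t j))) =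
       - ((- 1) ^ card K * (?s i * (\<Phi> ^^ k) (y i) * hp (insert i K) - ?T * (?s i * (\<Phi> ^^ Suc k) (y i) * h (insert i K))))"
      unfolding c p y r.mult by (simp add: algebra_simps)
  qed
  also have "\<dots> = - ((- 1) ^ card K * (kz_d n (\<lambda>i. (\<Phi> ^^ k) (y i)) hp K
          - (\<Phi> ^^ k) (\<Prod>j\<in>K. t j) * kz_d n (\<lambda>i. (\<Phi> ^^ Suc k) (y i)) h K))"
    unfolding kz_d_def by (simp add: sum_negf sum_subtractf sum_distrib_left right_diff_distrib mult.assoc)
  finally show ?thesis .
qed

lemma fk_dd:
  assumes rh: "rh \<Phi>" and ty: "\<And>i. i \<in> {1..n} \<Longrightarrow> \<Phi> (y i) = t i * y i"
    and m: "m \<in> fk_mod n l"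
  shows "fk_d n \<Phi> y t (fk_d n \<Phi> y t m) = (\<lambda>_. 0)"
proof
  fix x :: "nat set \<times> bool"
  obtain K b where x: "x = (K, b)" by fastforce
  let ?d = "fk_d n \<Phi> y t"
  show "?d (?d m) x = 0"
  proof (cases "K \<subseteq> {1..n}")
    case False
    have "?d (?d m) \<in> fk_mod n (l - 1 - 1)" by (intro fk_d_mod m)
    thus ?thesis using False x unfolding fk_mod_def by blast
  next
    case True
    hence fin: "finite K" using finite_subset by blast
    show ?thesis
    proof (rule poly_eqI)
      fix k
      let ?z = "\<lambda>k i. (\<Phi> ^^ k) (y i)"
      define g where "g = (\<lambda>I. coeff (m (I, False)) k)"
      define h where "h = (\<lambda>I. coeff (m (I, True)) k)"
      define hp where "hp = (\<lambda>I. if k = 0 then 0 else coeff (m (I, True)) (k - 1))"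
      define T where "T = (\<Phi> ^^ k) (\<Prod>j\<in>K. t j)"
      have dT: "(\<lambda>I. coeff (?d m (I, True)) k) = kz_d n (?z (Suc k)) h"
        unfolding h_def by (rule ext) (rule coeff_fk_d_T[OF rh])
      have dF: "(\<lambda>I. coeff (?d m (I, False)) k) = (\<lambda>I. kz_d n (?z k) g I +
          (- 1) ^ card I * (hp I - h I * (\<Phi> ^^ k) (\<Prod>j\<in>I. t j)))"
        unfolding g_def h_def hp_def by (rule ext) (rule coeff_fk_d_F[OF rh])
      have hpK: "(if k = 0 then 0 else coeff (?d m (K, True)) (k - 1)) = kz_d n (?z k) hp K"
      proof (cases k)
        case 0 thus ?thesis by (simp add: hp_def kz_d_zero)
      next
        case (Suc k')
        have "hp = (\<lambda>I. coeff (m (I, True)) k')" unfolding hp_def using Suc by simp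
        thus ?thesis using Suc by (simp add: coeff_fk_d_T[OF rh])
      qed
      show "coeff (?d (?d m) x) k = coeff 0 k"
      proof (cases b)
        case True
        hence xx: "x = (K, True)" using x by simp
        show ?thesis unfolding xx coeff_fk_d_T[OF rh] dT kz_dd by simp
      next
        case False
        hence xx: "x = (K, False)" using x by simp
        have cr: "kz_d n (?z k) (\<lambda>I. (- 1) ^ card I * (hp I - h I * (\<Phi> ^^ k) (\<Prod>j\<in>I. t j))) K
           = - ((- 1) ^ card K * (kz_d n (?z k) hp K - T * kz_d n (?z (Suc k)) h K))"
          unfolding T_def by (rule kz_d_cross[OF rh fin ty])
        have "coeff (?d (?d m) x) k = kz_d n (?z k) (\<lambda>I. coeff (?d m (I, False)) k) K
          + (- 1) ^ card K * ((if k = 0 then 0 else coeff (?d m (K, True)) (k - 1)) - coeff (?d m (K, True)) k * T)"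
          unfolding xx T_def by (rule coeff_fk_d_F[OF rh])
        also have "\<dots> = kz_d n (?z k) (kz_d n (?z k) g) K
          + kz_d n (?z k) (\<lambda>I. (- 1) ^ card I * (hp I - h I * (\<Phi> ^^ k) (\<Prod>j\<in>I. t j))) K
          + (- 1) ^ card K * (kz_d n (?z k) hp K - kz_d n (?z (Suc k)) h K * T)"
          using fun_cong[OF dT, of K] by (simp only: dF hpK kz_d_add)
        also have "\<dots> = 0"
          unfolding kz_dd cr by (simp add: algebra_simps)
        finally show ?thesis by simp
      qed
    qed
  qed
qed

lemma flat_set:
  fixes \<Phi> :: "'a::comm_ring_1 \<Rightarrow> 'a" and U :: "'u set"
  assumes fl: "flat_hom UNIV UNIV \<Phi>" and fin: "finite U" and eq: "(\<Sum>u\<in>U. \<Phi> (r u) * x u) = 0"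
  shows "\<exists>(Q::nat) a z. (\<forall>u\<in>U. x u = (\<Sum>j<Q. \<Phi> (a u j) * z j)) \<and> (\<forall>j<Q. (\<Sum>u\<in>U. r u * a u j) = 0)"
proof -
  obtain g where g: "bij_betw g {0..<card U} U" using ex_bij_betw_nat_finite[OF fin] by blast
  hence g': "bij_betw g {..<card U} U" by (simp add: atLeast0LessThan)
  define k where "k = card U"
  have "(\<Sum>i<k. \<Phi> (r (g i)) * x (g i)) = 0"
    using eq sum.reindex_bij_betw[OF g', of "\<lambda>u. \<Phi> (r u) * x u"] by (simp add: k_def)
  hence "\<exists>(q::nat) a z. (\<forall>j<q. z j \<in> UNIV) \<and> (\<forall>i<k. \<forall>j<q. a i j \<in> UNIV) \<and>
            (\<forall>i<k. x (g i) = (\<Sum>j<q. \<Phi> (a i j) * z j)) \<and>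
            (\<forall>j<q. (\<Sum>i<k. r (g i) * a i j) = 0)"
    by (intro fl[unfolded flat_hom_def, rule_format, of k "\<lambda>i. r (g i)" "\<lambda>i. x (g i)"]) auto
  then obtain q :: nat and a z where q: "\<forall>i<k. x (g i) = (\<Sum>j<q. \<Phi> (a i j) * z j)"
      "\<forall>j<q. (\<Sum>i<k. r (g i) * a i j) = 0"
    by blast
  define hh where "hh = inv_into {..<k} g"
  have hh: "bij_betw hh U {..<k}" unfolding hh_def k_def by (rule bij_betw_inv_into[OF g'])
  have ghh: "\<And>u. u \<in> U \<Longrightarrow> g (hh u) = u"
    unfolding hh_def k_def using g' by (meson bij_betw_inv_into_right)
  have hhg: "\<And>i. i < k \<Longrightarrow> hh (g i) = i"
    unfolding hh_def k_def using g' by (simp add: bij_betw_inv_into_left)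
  show ?thesis
  proof (intro exI conjI ballI allI impI)
    fix u assume u: "u \<in> U"
    have "hh u < k" using hh u by (auto simp: bij_betw_def)
    thus "x u = (\<Sum>j<q. \<Phi> (a (hh u) j) * z j)" using q(1) ghh[OF u] by metis
  next
    fix j assume j: "j < q"
    have "(\<Sum>u\<in>U. r u * a (hh u) j) = (\<Sum>i<k. r (g i) * a (hh (g i)) j)"
      using sum.reindex_bij_betw[OF g', of "\<lambda>u. r u * a (hh u) j"] by (simp add: k_def)
    also have "\<dots> = (\<Sum>i<k. r (g i) * a i j)" by (rule sum.cong) (auto simp: hhg)
    finally show "(\<Sum>u\<in>U. r u * a (hh u) j) = 0" using q(2) j by simp
  qed
qed

lemma flat_multi:
  fixes \<Phi> :: "'a::comm_ring_1 \<Rightarrow> 'a" and U :: "'u set" and E :: "'e set"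
  assumes rh: "rh \<Phi>" and fl: "flat_hom UNIV UNIV \<Phi>" and fin: "finite U" and finE: "finite E"
    and eq: "\<forall>e\<in>E. (\<Sum>u\<in>U. \<Phi> (r e u) * x u) = 0"
  shows "\<exists>(Q::nat) a z. (\<forall>u\<in>U. x u = (\<Sum>j<Q. \<Phi> (a u j) * z j)) \<and> (\<forall>e\<in>E. \<forall>j<Q. (\<Sum>u\<in>U. r e u * a u j) = 0)"
  using finE eq
proof (induction E rule: finite_induct)
  case empty
  have "(\<Sum>u\<in>U. \<Phi> 0 * x u) = 0" using rh.zero[OF rh] by simp
  from flat_set[OF fl fin this] show ?case by auto
next
  case (insert e E)
  have "\<forall>e\<in>E. (\<Sum>u\<in>U. \<Phi> (r e u) * x u) = 0" using insert.prems by auto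
  from insert.IH[OF this] obtain Q :: nat and a z where Qa: "\<forall>u\<in>U. x u = (\<Sum>j<Q. \<Phi> (a u j) * z j)"
      "\<forall>e\<in>E. \<forall>j<Q. (\<Sum>u\<in>U. r e u * a u j) = 0" by blast
  define r' where "r' j = (\<Sum>u\<in>U. r e u * a u j)" for j
  have "(\<Sum>j\<in>{..<Q}. \<Phi> (r' j) * z j) = (\<Sum>u\<in>U. \<Phi> (r e u) * x u)"
  proof -
    have "(\<Sum>j\<in>{..<Q}. \<Phi> (r' j) * z j) = (\<Sum>j<Q. \<Sum>u\<in>U. \<Phi> (r e u) * (\<Phi> (a u j) * z j))"
      unfolding r'_def by (simp add: rh.sum[OF rh] rh.mult[OF rh] sum_distrib_right mult.assoc)
    also have "\<dots> = (\<Sum>u\<in>U. \<Phi> (r e u) * (\<Sum>j<Q. \<Phi> (a u j) * z j))"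
      by (subst sum.swap) (simp add: sum_distrib_left)
    also have "\<dots> = (\<Sum>u\<in>U. \<Phi> (r e u) * x u)"
      using Qa(1) by (intro sum.cong) auto
    finally show ?thesis .
  qed
  also have "\<dots> = 0" using insert.prems by auto
  finally obtain Q' :: nat and b w where bw: "\<forall>j\<in>{..<Q}. z j = (\<Sum>h<Q'. \<Phi> (b j h) * w h)"
      "\<forall>h<Q'. (\<Sum>j\<in>{..<Q}. r' j * b j h) = 0"
    using flat_set[OF fl, of "{..<Q}" r' z] by auto
  define a' where "a' u h = (\<Sum>j<Q. a u j * b j h)" for u h
  show ?case
  proof (intro exI[of _ Q'] exI[of _ a'] exI[of _ w] conjI ballI allI impI)
    fix u assume u: "u \<in> U"
    have "x u = (\<Sum>j<Q. \<Phi> (a u j) * (\<Sum>h<Q'. \<Phi> (b j h) * w h))"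
      using Qa(1) bw(1) u by simp
    also have "\<dots> = (\<Sum>h<Q'. \<Phi> (a' u h) * w h)"
      unfolding a'_def
      by (simp add: rh.sum[OF rh] rh.mult[OF rh] sum_distrib_left sum_distrib_right mult.assoc)
        (rule sum.swap)
    finally show "x u = (\<Sum>h<Q'. \<Phi> (a' u h) * w h)" .
  next
    fix e' h assume e': "e' \<in> insert e E" and h: "h < Q'"
    have "(\<Sum>u\<in>U. r e' u * a' u h) = (\<Sum>j<Q. (\<Sum>u\<in>U. r e' u * a u j) * b j h)"
      unfolding a'_def by (simp add: sum_distrib_left sum_distrib_right mult.assoc) (rule sum.swap)
    also have "\<dots> = 0"
    proof (cases "e' = e")
      case True
      thus ?thesis using bw(2) h by (simp add: r'_def)
    next
      case False
      hence "e' \<in> E" using e' by simp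
      thus ?thesis using Qa(2) by simp
    qed
    finally show "(\<Sum>u\<in>U. r e' u * a' u h) = 0" .
  qed
qed

lemma finite_U: "finite {I. I \<subseteq> {1..(n::nat)} \<and> P I}"
  by (rule finite_subset[of _ "Pow {1..n}"]) auto

lemma reidx:
  fixes c :: "nat \<Rightarrow> 'a::comm_ring_1"
  assumes K: "K \<subseteq> {1..(n::nat)}" "card K = l - 1" "l \<ge> 1"
  shows "(\<Sum>I\<in>{I. I \<subseteq> {1..n} \<and> card I = l}. (\<Sum>i\<in>{1..n}-K. if I = insert i K then c i else 0) * w I)
       = (\<Sum>i\<in>{1..n}-K. c i * w (insert i K))"
proof -
  let ?U = "{I. I \<subseteq> {1..n} \<and> card I = l}"
  have fK: "finite K" by (rule finite_subset[OF K(1)]) simp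
  have "(\<Sum>I\<in>?U. (\<Sum>i\<in>{1..n}-K. if I = insert i K then c i else 0) * w I)
      = (\<Sum>I\<in>?U. \<Sum>i\<in>{1..n}-K. if I = insert i K then c i * w I else 0)"
    by (intro sum.cong refl) (simp add: sum_distrib_right if_distrib[where f="\<lambda>x. x * _"] cong: if_cong)
  also have "\<dots> = (\<Sum>i\<in>{1..n}-K. \<Sum>I\<in>?U. if I = insert i K then c i * w I else 0)"
    by (rule sum.swap)
  also have "\<dots> = (\<Sum>i\<in>{1..n}-K. if insert i K \<in> ?U then c i * w (insert i K) else 0)"
    by (rule sum.cong[OF refl]) (rule sum.delta[OF finite_U])
  also have "\<dots> = (\<Sum>i\<in>{1..n}-K. c i * w (insert i K))"
  proof (rule sum.cong[OF refl])
    fix i assume i: "i \<in> {1..n} - K"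
    have "card (insert i K) = l" using i K fK by simp
    moreover have "insert i K \<subseteq> {1..n}" using i K(1) by simp
    ultimately have "insert i K \<in> ?U" by simp
    thus "(if insert i K \<in> ?U then c i * w (insert i K) else 0) = c i * w (insert i K)" by simp
  qed
  finally show ?thesis .
qed

lemma ins_in_U:
  assumes "insert i K \<in> {I. I \<subseteq> {1..(n::nat)} \<and> card I = l}" "i \<notin> K" "l \<ge> 1"
  shows "K \<subseteq> {1..n} \<and> card K = l - 1"
proof -
  have "insert i K \<subseteq> {1..n}" using assms(1) by simp
  hence "finite (insert i K)" by (rule finite_subset) simp
  hence "finite K" by simp
  thus ?thesis using assms by auto
qed

lemma kz_transfer:
  fixes \<Phi> :: "'a::comm_ring_1 \<Rightarrow> 'a"
  assumes rh: "rh \<Phi>" and fl: "flat_hom UNIV UNIV \<Phi>" and reg: "koszul_regular n y"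
  shows "koszul_regular n (\<lambda>i. \<Phi> (y i))"
  unfolding koszul_regular_def
proof (intro allI impI ballI)
  fix l :: nat and m assume l: "l \<ge> 1" and m: "m \<in> kz_mod n l" and cyc: "kz_d n (\<lambda>i. \<Phi> (y i)) m = (\<lambda>_. 0)"
  define U where "U = {I. I \<subseteq> {1..n} \<and> card I = l}"
  define E where "E = {K. K \<subseteq> {1..n} \<and> card K = l - 1}"
  define sg where "sg K (i::nat) = ((- 1) ^ card {j\<in>K. j < i} :: 'a)" for K i
  define r where "r K I = (\<Sum>i\<in>{1..n}-K. if I = insert i K then sg K i * y i else 0)" for K I
  have finU: "finite U" and finE: "finite E" unfolding U_def E_def by (rule finite_U)+
  have Phr: "\<Phi> (r K I) = (\<Sum>i\<in>{1..n}-K. if I = insert i K then sg K i * \<Phi> (y i) else 0)" for K I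
    unfolding r_def rh.sum[OF rh]
  proof (rule sum.cong[OF refl])
    fix i
    show "\<Phi> (if I = insert i K then sg K i * y i else 0) = (if I = insert i K then sg K i * \<Phi> (y i) else 0)"
      by (cases "I = insert i K") (simp_all add: sg_def rh.mult[OF rh] rh.m1pow[OF rh] rh.zero[OF rh])
  qed
  have mU: "\<And>I. I \<notin> U \<Longrightarrow> m I = 0" using m unfolding kz_mod_def U_def by blast
  have eqs: "\<forall>K\<in>E. (\<Sum>I\<in>U. \<Phi> (r K I) * m I) = 0"
  proof
    fix K assume K: "K \<in> E"
    have KE: "K \<subseteq> {1..n}" "card K = l - 1" using K unfolding E_def by auto
    have "(\<Sum>I\<in>U. \<Phi> (r K I) * m I) = (\<Sum>i\<in>{1..n}-K. sg K i * \<Phi> (y i) * m (insert i K))"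
      unfolding Phr U_def by (rule reidx[OF KE l])
    also have "\<dots> = kz_d n (\<lambda>i. \<Phi> (y i)) m K" by (simp add: kz_d_def sg_def)
    finally show "(\<Sum>I\<in>U. \<Phi> (r K I) * m I) = 0" using cyc by simp
  qed
  obtain Q :: nat and a z where az: "\<forall>I\<in>U. m I = (\<Sum>j<Q. \<Phi> (a I j) * z j)"
      "\<forall>K\<in>E. \<forall>j<Q. (\<Sum>I\<in>U. r K I * a I j) = 0"
    using flat_multi[OF rh fl finU finE eqs] by blast
  define c where "c j I = (if I \<in> U then a I j else 0)" for j I
  have cmod: "c j \<in> kz_mod n l" for j unfolding c_def kz_mod_def U_def by auto
  have ccyc: "kz_d n y (c j) = (\<lambda>_. 0)" if j: "j < Q" for j
  proof
    fix K
    show "kz_d n y (c j) K = 0"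
    proof (cases "K \<in> E")
      case True
      have k1: "kz_d n y (c j) K = (\<Sum>i\<in>{1..n}-K. sg K i * y i * c j (insert i K))"
        by (simp add: kz_d_def sg_def)
      have KE: "K \<subseteq> {1..n}" "card K = l - 1" using True unfolding E_def by auto
      have "(\<Sum>i\<in>{1..n}-K. sg K i * y i * c j (insert i K)) = (\<Sum>I\<in>U. r K I * c j I)"
        unfolding r_def U_def by (rule reidx[OF KE l, symmetric])
      also have "\<dots> = (\<Sum>I\<in>U. r K I * a I j)" by (rule sum.cong) (auto simp: c_def)
      finally show ?thesis using k1 az(2) True j by simp
    next
      case False
      have "c j (insert i K) = 0" if "i \<in> {1..n} - K" for i
        using ins_in_U[of i K n l] that False l unfolding c_def U_def E_def by auto
      thus ?thesis by (simp add: kz_d_def)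
    qed
  qed
  have "\<forall>j\<in>{..<Q}. \<exists>c'. c' \<in> kz_mod n (Suc l) \<and> kz_d n y c' = c j"
  proof
    fix j assume "j \<in> {..<Q}"
    hence j: "j < Q" by simp
    from reg[unfolded koszul_regular_def, rule_format, OF l cmod ccyc[OF j]]
    show "\<exists>c'. c' \<in> kz_mod n (Suc l) \<and> kz_d n y c' = c j" by blast
  qed
  then obtain cc where cc: "\<And>j. j < Q \<Longrightarrow> cc j \<in> kz_mod n (Suc l) \<and> kz_d n y (cc j) = c j"
    by (metis bchoice lessThan_iff)
  define m' where "m' J = (\<Sum>j<Q. \<Phi> (cc j J) * z j)" for J
  show "\<exists>m'\<in>kz_mod n (Suc l). kz_d n (\<lambda>i. \<Phi> (y i)) m' = m"
  proof (intro bexI[of _ m'] ext)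
    show "m' \<in> kz_mod n (Suc l)"
      unfolding kz_mod_def
    proof (intro CollectI allI impI)
      fix J assume "m' J \<noteq> 0"
      then obtain j where j: "j < Q" "cc j J \<noteq> 0"
        unfolding m'_def using rh.zero[OF rh] by (force dest!: sum_nz)
      thus "J \<subseteq> {1..n} \<and> card J = Suc l" using cc[OF j(1)] unfolding kz_mod_def by blast
    qed
  next
    fix K
    have "kz_d n (\<lambda>i. \<Phi> (y i)) m' K = (\<Sum>i\<in>{1..n}-K. \<Sum>j<Q. ((- 1) ^ card {j \<in> K. j < i} * \<Phi> (y i) * \<Phi> (cc j (insert i K))) * z j)"
      unfolding kz_d_def m'_def by (simp only: sum_distrib_left mult.assoc)
    also have "\<dots> = (\<Sum>j<Q. \<Sum>i\<in>{1..n}-K. ((- 1) ^ card {j \<in> K. j < i} * \<Phi> (y i) * \<Phi> (cc j (insert i K))) * z j)"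
      by (rule sum.swap)
    also have "\<dots> = (\<Sum>j<Q. \<Phi> (kz_d n y (cc j) K) * z j)"
      unfolding kz_d_def by (simp only: rh.sum[OF rh] rh.mult[OF rh] rh.m1pow[OF rh] sum_distrib_right)
    also have "\<dots> = (\<Sum>j<Q. \<Phi> (c j K) * z j)"
      by (intro sum.cong refl) (simp add: cc)
    also have "\<dots> = m K"
    proof (cases "K \<in> U")
      case True thus ?thesis using az(1) by (simp add: c_def)
    next
      case False thus ?thesis using mU[OF False] by (simp add: c_def rh.zero[OF rh])
    qed
    finally show "kz_d n (\<lambda>i. \<Phi> (y i)) m' K = m K" .
  qed
qed

lemma kz_iter:
  assumes rh: "rh \<Phi>" and fl: "flat_hom UNIV UNIV \<Phi>" and reg: "koszul_regular n y"
  shows "koszul_regular n (\<lambda>i. (\<Phi> ^^ k) (y i))"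
proof (induction k)
  case 0 thus ?case using reg by simp
next
  case (Suc k)
  from kz_transfer[OF rh fl Suc] show ?case by (simp only: funpow.simps comp_def)
qed

lemma coeff_const1: "coeff [:a:] k = (if k = 0 then a else 0)"
  by (cases k) simp_all

definition mkp :: "nat \<Rightarrow> (nat \<Rightarrow> 'a::comm_ring_1) \<Rightarrow> 'a poly" where
  "mkp D f = (\<Sum>k\<le>D. monom (f k) k)"

lemma coeff_mkp: "coeff (mkp D f) j = (if j \<le> D then f j else 0)"
  unfolding mkp_def by (simp add: coeff_sum coeff_monom)

lemma fk_ext:
  fixes m1 m2 :: "nat set \<times> bool \<Rightarrow> 'a::comm_ring_1 poly"
  assumes "\<And>K b k. coeff (m1 (K, b)) k = coeff (m2 (K, b)) k"
  shows "m1 = m2"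
proof
  fix x :: "nat set \<times> bool"
  obtain K b where "x = (K, b)" by fastforce
  thus "m1 x = m2 x" using assms by (simp add: poly_eqI)
qed

lemma fk_bound:
  fixes m :: "nat set \<times> bool \<Rightarrow> 'a::comm_ring_1 poly"
  assumes "m \<in> fk_mod n l"
  shows "\<exists>D. \<forall>x k. D < k \<longrightarrow> coeff (m x) k = 0"
proof -
  let ?S = "Pow {1..n} \<times> (UNIV :: bool set)"
  have fin: "finite ?S" by simp
  define D where "D = Max ((\<lambda>x. degree (m x)) ` ?S)"
  show ?thesis
  proof (intro exI allI impI)
    fix x :: "nat set \<times> bool" and k assume k: "D < k"
    obtain I b where x: "x = (I, b)" by fastforce
    show "coeff (m x) k = 0"
    proof (cases "m x = 0")
      case False
      hence "I \<subseteq> {1..n}" using assms x unfolding fk_mod_def by auto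
      hence "x \<in> ?S" using x by simp
      hence "degree (m x) \<le> D" unfolding D_def using fin by simp
      thus ?thesis using k by (simp add: coeff_eq_0)
    qed simp
  qed
qed

lemma fk_mod_add:
  assumes "m1 \<in> fk_mod n l" "m2 \<in> fk_mod n l" shows "(\<lambda>x. m1 x + m2 x) \<in> fk_mod n l"
  unfolding fk_mod_def
proof (intro CollectI allI impI)
  fix I b assume "m1 (I, b) + m2 (I, b) \<noteq> 0"
  hence "m1 (I, b) \<noteq> 0 \<or> m2 (I, b) \<noteq> 0" by auto
  thus "I \<subseteq> {1..n} \<and> card I + (if b then 1 else 0) = l" using assms unfolding fk_mod_def by blast
qed

lemma fk_mod_diff:
  assumes "m1 \<in> fk_mod n l" "m2 \<in> fk_mod n l" shows "(\<lambda>x. m1 x - m2 x) \<in> fk_mod n l"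
  unfolding fk_mod_def
proof (intro CollectI allI impI)
  fix I b assume "m1 (I, b) - m2 (I, b) \<noteq> 0"
  hence "m1 (I, b) \<noteq> 0 \<or> m2 (I, b) \<noteq> 0" by auto
  thus "I \<subseteq> {1..n} \<and> card I + (if b then 1 else 0) = l" using assms unfolding fk_mod_def by blast
qed

lemma fk_d_add:
  assumes rh: "rh \<Phi>"
  shows "fk_d n \<Phi> y t (\<lambda>x. m1 x + m2 x) = (\<lambda>x. fk_d n \<Phi> y t m1 x + fk_d n \<Phi> y t m2 x)"
proof (rule fk_ext)
  fix K b k
  show "coeff (fk_d n \<Phi> y t (\<lambda>x. m1 x + m2 x) (K, b)) k = coeff (fk_d n \<Phi> y t m1 (K, b) + fk_d n \<Phi> y t m2 (K, b)) k"
    by (cases b) (simp_all add: coeff_fk_d_F[OF rh] coeff_fk_d_T[OF rh] kz_d_add algebra_simps)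
qed

lemma fk_d_diff:
  assumes rh: "rh \<Phi>"
  shows "fk_d n \<Phi> y t (\<lambda>x. m1 x - m2 x) = (\<lambda>x. fk_d n \<Phi> y t m1 x - fk_d n \<Phi> y t m2 x)"
proof (rule fk_ext)
  fix K b k
  show "coeff (fk_d n \<Phi> y t (\<lambda>x. m1 x - m2 x) (K, b)) k = coeff (fk_d n \<Phi> y t m1 (K, b) - fk_d n \<Phi> y t m2 (K, b)) k"
    by (cases b) (simp_all add: coeff_fk_d_F[OF rh] coeff_fk_d_T[OF rh] kz_d_diff algebra_simps)
qed

lemma gi_zero: "0 \<in> gen_ideal n y"
  unfolding gen_ideal_def by (auto intro: exI[of _ "\<lambda>_. 0"])

lemma gi_intro: "x = (\<Sum>i\<in>{1..n}. c i * y i) \<Longrightarrow> x \<in> gen_ideal n y"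
  unfolding gen_ideal_def by (intro CollectI exI[of _ c]) simp

lemma gi_add: assumes "a \<in> gen_ideal n y" "b \<in> gen_ideal n y" shows "a + b \<in> gen_ideal n y"
proof -
  obtain f g where "a = (\<Sum>i\<in>{1..n}. f i * y i)" "b = (\<Sum>i\<in>{1..n}. g i * y i)"
    using assms unfolding gen_ideal_def by blast
  hence "a + b = (\<Sum>i\<in>{1..n}. (f i + g i) * y i)" by (simp add: sum.distrib algebra_simps)
  thus ?thesis by (rule gi_intro)
qed

lemma gi_diff: assumes "a \<in> gen_ideal n y" "b \<in> gen_ideal n y" shows "a - b \<in> gen_ideal n y"
proof -
  obtain f g where "a = (\<Sum>i\<in>{1..n}. f i * y i)" "b = (\<Sum>i\<in>{1..n}. g i * y i)"
    using assms unfolding gen_ideal_def by blast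
  hence "a - b = (\<Sum>i\<in>{1..n}. (f i - g i) * y i)" by (simp add: sum_subtractf algebra_simps)
  thus ?thesis by (rule gi_intro)
qed

lemma gi_mult: assumes "a \<in> gen_ideal n y" shows "r * a \<in> gen_ideal n y"
proof -
  obtain f where "a = (\<Sum>i\<in>{1..n}. f i * y i)"
    using assms unfolding gen_ideal_def by blast
  hence "r * a = (\<Sum>i\<in>{1..n}. (r * f i) * y i)" by (simp add: sum_distrib_left algebra_simps)
  thus ?thesis by (rule gi_intro)
qed

lemma gi_sum: "(\<And>x. x \<in> A \<Longrightarrow> f x \<in> gen_ideal n y) \<Longrightarrow> sum f A \<in> gen_ideal n y"
  by (induction A rule: infinite_finite_induct) (auto simp: gi_zero gi_add)

lemma gi_gen: assumes "i \<in> {1..n}" shows "y i \<in> gen_ideal n y"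
proof -
  have "(\<Sum>j\<in>{1..n}. (if j = i then 1 else 0) * y j) = (\<Sum>j\<in>{1..n}. if j = i then y j else 0)"
    by (rule sum.cong) auto
  also have "\<dots> = y i" using assms by simp
  finally show ?thesis unfolding gen_ideal_def by (auto intro!: exI[of _ "\<lambda>j. if j = i then 1 else 0"])
qed

lemma poly1: fixes p :: "'a::comm_ring_1 poly" assumes "degree p \<le> N" shows "poly p 1 = (\<Sum>i\<le>N. coeff p i)"
proof -
  have "poly p 1 = (\<Sum>i\<le>degree p. coeff p i * 1 ^ i)" by (rule poly_altdef)
  also have "\<dots> = (\<Sum>i\<le>degree p. coeff p i)" by simp
  also have "\<dots> = (\<Sum>i\<le>N. coeff p i)"
    using assms by (intro sum.mono_neutral_left) (auto simp: coeff_eq_0)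
  finally show ?thesis .
qed

lemma poly_map1:
  assumes "rh f"
  shows "poly (map_poly f q) 1 = f (poly q 1)"
proof -
  have "poly (map_poly f q) 1 = (\<Sum>i\<le>degree q. coeff (map_poly f q) i)"
    by (rule poly1) (rule map_poly_degree_leq)
  also have "\<dots> = (\<Sum>i\<le>degree q. f (coeff q i))"
    by (simp add: coeff_map_poly rh.zero[OF assms])
  also have "\<dots> = f (\<Sum>i\<le>degree q. coeff q i)"
    by (simp add: rh.sum[OF assms])
  also have "\<dots> = f (poly q 1)" using poly1[of q "degree q"] by simp
  finally show ?thesis .
qed

lemma poly_skmult1:
  assumes "rh \<Phi>"
  shows "poly (skmult \<Phi> p q) 1 = skact \<Phi> p (poly q 1)"
  unfolding skmult_def skact_def
  by (simp add: poly_sum poly_monom poly_map1[OF rhP[OF assms]])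

definition mkfk :: "bool \<Rightarrow> nat \<Rightarrow> (nat \<Rightarrow> nat set \<Rightarrow> 'a::comm_ring_1) \<Rightarrow> (nat set \<times> bool \<Rightarrow> 'a poly)" where
  "mkfk bb D g = (\<lambda>(I, b). if b = bb then mkp D (\<lambda>k. g k I) else 0)"

lemma coeff_mkfk:
  assumes "\<forall>k>D. g k = (\<lambda>_. 0)"
  shows "coeff (mkfk bb D g (I, b)) k = (if b = bb then g k I else 0)"
  using assms by (auto simp: mkfk_def coeff_mkp)

lemma mkfk_mod:
  assumes "\<forall>k. g k \<in> kz_mod n L"
  shows "mkfk bb D g \<in> fk_mod n (L + (if bb then 1 else 0))"
  unfolding fk_mod_def
proof (intro CollectI allI impI)
  fix I b assume nz: "mkfk bb D g (I, b) \<noteq> 0"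
  hence b: "b = bb" by (auto simp: mkfk_def split: if_splits)
  have "\<exists>k. g k I \<noteq> 0"
  proof (rule ccontr)
    assume "\<not> (\<exists>k. g k I \<noteq> 0)"
    hence "mkp D (\<lambda>k. g k I) = 0" by (intro poly_eqI) (simp add: coeff_mkp)
    thus False using nz b by (simp add: mkfk_def)
  qed
  then obtain k where "g k I \<noteq> 0" by blast
  hence "I \<subseteq> {1..n} \<and> card I = L" using assms unfolding kz_mod_def by blast
  thus "I \<subseteq> {1..n} \<and> card I + (if b then 1 else 0) = L + (if bb then 1 else 0)" using b by simp
qed

lemma choose_fam:
  fixes D :: nat
  assumes "\<forall>k. \<exists>g. g \<in> S k \<and> P k g" and "\<forall>k>D. (\<lambda>_. 0) \<in> S k \<and> P k (\<lambda>_. 0)"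
  shows "\<exists>G. (\<forall>k. G k \<in> S k \<and> P k (G k)) \<and> (\<forall>k>D. G k = (\<lambda>_. 0))"
proof -
  define G where "G k = (if k \<le> D then SOME g. g \<in> S k \<and> P k g else (\<lambda>_. 0))" for k
  have "\<forall>k. G k \<in> S k \<and> P k (G k)"
  proof
    fix k show "G k \<in> S k \<and> P k (G k)"
    proof (cases "k \<le> D")
      case True thus ?thesis unfolding G_def using someI_ex[OF assms(1)[rule_format, of k]] by simp
    next
      case False hence "k > D" by simp
      thus ?thesis unfolding G_def using assms(2) by simp
    qed
  qed
  moreover have "\<forall>k>D. G k = (\<lambda>_. 0)" unfolding G_def by simp
  ultimately show ?thesis by blast
qed

lemma kz_d_zero_fun: "kz_d n z (\<lambda>_. 0) = (\<lambda>_. 0)"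
  by (rule ext) (simp add: kz_d_def)

lemma zero_kz_mod: "(\<lambda>_. 0) \<in> kz_mod n l"
  by (simp add: kz_mod_def)

locale fkctx =
  fixes n :: nat and \<Phi> :: "'a::comm_ring_1 \<Rightarrow> 'a" and y t :: "nat \<Rightarrow> 'a"
  assumes rh: "rh \<Phi>" and ty: "\<And>i. i \<in> {1..n} \<Longrightarrow> \<Phi> (y i) = t i * y i"
    and fl: "flat_hom UNIV UNIV \<Phi>" and reg: "koszul_regular n y"
begin

abbreviation d where "d \<equiv> fk_d n \<Phi> y t"
abbreviation zz where "zz k \<equiv> (\<lambda>i. (\<Phi> ^^ k) (y i))"

lemma regk: "koszul_regular n (zz k)"
  by (rule kz_iter[OF rh fl reg])

lemma stepF:
  assumes m: "m \<in> fk_mod n l" and l: "l \<ge> 1" and cyc: "d m = (\<lambda>_. 0)" and mT: "\<forall>I. m (I, True) = 0"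
  shows "\<exists>a'\<in>fk_mod n (Suc l). (\<forall>I. a' (I, True) = 0) \<and> d a' = m"
proof -
  obtain D where D: "\<forall>x k. D < k \<longrightarrow> coeff (m x) k = 0" using fk_bound[OF m] by blast
  define a where "a k = (\<lambda>I. coeff (m (I, False)) k)" for k
  have amod: "a k \<in> kz_mod n l" for k
    unfolding kz_mod_def
  proof (intro CollectI allI impI)
    fix I assume "a k I \<noteq> 0"
    hence "m (I, False) \<noteq> 0" unfolding a_def by auto
    thus "I \<subseteq> {1..n} \<and> card I = l" using m unfolding fk_mod_def by fastforce
  qed
  have acyc: "kz_d n (zz k) (a k) = (\<lambda>_. 0)" for k
  proof
    fix K
    have "coeff (d m (K, False)) k = kz_d n (zz k) (a k) K"
      unfolding coeff_fk_d_F[OF rh] a_def using mT by simp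
    thus "kz_d n (zz k) (a k) K = 0" using cyc by simp
  qed
  have ex: "\<forall>k. \<exists>g. g \<in> kz_mod n (Suc l) \<and> kz_d n (zz k) g = a k"
  proof
    fix k
    from regk[of k, unfolded koszul_regular_def, rule_format, OF l amod acyc]
    show "\<exists>g. g \<in> kz_mod n (Suc l) \<and> kz_d n (zz k) g = a k" by blast
  qed
  have big: "\<forall>k>D. (\<lambda>_. 0) \<in> kz_mod n (Suc l) \<and> kz_d n (zz k) (\<lambda>_. 0) = a k"
    using D by (auto simp: zero_kz_mod kz_d_zero_fun a_def)
  obtain G where G: "\<forall>k. G k \<in> kz_mod n (Suc l) \<and> kz_d n (zz k) (G k) = a k" "\<forall>k>D. G k = (\<lambda>_. 0)"
    using choose_fam[OF ex big] by blast
  define a' where "a' = mkfk False D G"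
  have cf: "coeff (a' (I, b)) k = (if b then 0 else G k I)" for I b k
    unfolding a'_def using coeff_mkfk[OF G(2)] by simp
  show ?thesis
  proof (intro bexI conjI allI)
    show "a' \<in> fk_mod n (Suc l)" using mkfk_mod[of G n "Suc l" False D] G(1) unfolding a'_def by simp
    fix I show "a' (I, True) = 0" unfolding a'_def mkfk_def by simp
  next
    show "d a' = m"
    proof (rule fk_ext)
      fix K b k
      show "coeff (d a' (K, b)) k = coeff (m (K, b)) k"
      proof (cases b)
        case True
        thus ?thesis using mT by (simp add: coeff_fk_d_T[OF rh] cf kz_d_zero)
      next
        case False
        have "(\<lambda>I. coeff (a' (I, False)) k) = G k" by (rule ext) (simp add: cf)
        thus ?thesis using False G(1) by (simp add: coeff_fk_d_F[OF rh] cf a_def)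
      qed
    qed
  qed
qed

end

context fkctx begin

lemma Psuc: "i \<in> {1..n} \<Longrightarrow> (\<Phi> ^^ Suc j) (y i) = (\<Phi> ^^ j) (t i) * (\<Phi> ^^ j) (y i)"
proof -
  assume i: "i \<in> {1..n}"
  have "(\<Phi> ^^ Suc j) (y i) = (\<Phi> ^^ j) (\<Phi> (y i))" by (simp only: funpow_Suc_right comp_def)
  also have "\<dots> = (\<Phi> ^^ j) (t i * y i)" using ty[OF i] by simp
  finally show ?thesis by (simp only: rh.mult[OF rhP[OF rh]])
qed

lemma Jsub: "x \<in> gen_ideal n (zz (Suc j)) \<Longrightarrow> x \<in> gen_ideal n (zz j)"
proof -
  assume "x \<in> gen_ideal n (zz (Suc j))"
  then obtain c where c: "x = (\<Sum>i\<in>{1..n}. c i * (\<Phi> ^^ Suc j) (y i))" unfolding gen_ideal_def by blast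
  have "x = (\<Sum>i\<in>{1..n}. (c i * (\<Phi> ^^ j) (t i)) * (\<Phi> ^^ j) (y i))"
    unfolding c
  proof (rule sum.cong[OF refl])
    fix i assume i: "i \<in> {1..n}"
    show "c i * (\<Phi> ^^ Suc j) (y i) = c i * (\<Phi> ^^ j) (t i) * (\<Phi> ^^ j) (y i)"
      unfolding Psuc[OF i] by (simp only: mult.assoc)
  qed
  thus ?thesis by (rule gi_intro)
qed

lemma kzJ: "kz_d n (zz j) g {} \<in> gen_ideal n (zz j)"
proof (rule gi_intro)
  show "kz_d n (zz j) g {} = (\<Sum>i\<in>{1..n}. g {i} * (\<Phi> ^^ j) (y i))"
    unfolding kz_d_def by (simp add: mult.commute)
qed

lemma low:
  assumes m: "m \<in> fk_mod n 1" and cyc: "d m = (\<lambda>_. 0)"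
  shows "\<exists>g. g \<in> kz_mod n 1 \<and> kz_d n (zz (Suc k)) g = (\<lambda>I. coeff (m (I, True)) k)"
proof -
  obtain D where D: "\<forall>x k. D < k \<longrightarrow> coeff (m x) k = 0" using fk_bound[OF m] by blast
  define c where "c k = coeff (m ({}, True)) k" for k
  have e: "c k = c (Suc k) - kz_d n (zz (Suc k)) (\<lambda>I. coeff (m (I, False)) (Suc k)) {}" for k
  proof -
    have "coeff (d m ({}, False)) (Suc k) = 0" using cyc by simp
    moreover have "(\<Phi> ^^ Suc k) 1 = 1" using rh.one[OF rhP[OF rh]] by blast
    ultimately show ?thesis unfolding coeff_fk_d_F[OF rh] c_def by (simp add: algebra_simps)
  qed
  have down: "D < k + N \<longrightarrow> c k \<in> gen_ideal n (zz (Suc k))" for N k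
  proof (induction N arbitrary: k)
    case 0
    show ?case using D by (simp add: c_def gi_zero)
  next
    case (Suc N)
    show ?case
    proof
      assume "D < k + Suc N"
      show "c k \<in> gen_ideal n (zz (Suc k))"
      proof (cases "D < k + N")
        case True thus ?thesis using Suc.IH by blast
      next
        case False
        hence "D < Suc k + N" using \<open>D < k + Suc N\<close> by simp
        hence "c (Suc k) \<in> gen_ideal n (zz (Suc (Suc k)))" using Suc.IH by blast
        hence "c (Suc k) \<in> gen_ideal n (zz (Suc k))" by (rule Jsub)
        thus ?thesis unfolding e[of k] by (intro gi_diff kzJ)
      qed
    qed
  qed
  have "c k \<in> gen_ideal n (zz (Suc k))" using down[of k "Suc D"] by simp
  then obtain cf where cf: "c k = (\<Sum>i\<in>{1..n}. cf i * (\<Phi> ^^ Suc k) (y i))"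
    unfolding gen_ideal_def by blast
  define g where "g I = (\<Sum>i\<in>{1..n}. if I = {i} then cf i else 0)" for I
  have gi: "g {i} = cf i" if "i \<in> {1..n}" for i
  proof -
    have "g {i} = (\<Sum>j\<in>{1..n}. if j = i then cf j else 0)" unfolding g_def by (rule sum.cong) auto
    thus ?thesis using that by simp
  qed
  show ?thesis
  proof (intro exI conjI)
    show "g \<in> kz_mod n 1"
      unfolding kz_mod_def
    proof (intro CollectI allI impI)
      fix I assume "g I \<noteq> 0"
      then obtain i where "i \<in> {1..n}" "I = {i}" unfolding g_def by (auto dest!: sum_nz split: if_splits)
      thus "I \<subseteq> {1..n} \<and> card I = 1" by simp
    qed
    show "kz_d n (zz (Suc k)) g = (\<lambda>I. coeff (m (I, True)) k)"
    proof
      fix K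
      show "kz_d n (zz (Suc k)) g K = coeff (m (K, True)) k"
      proof (cases "K = {}")
        case True
        have "kz_d n (zz (Suc k)) g K = (\<Sum>i\<in>{1..n}. (\<Phi> ^^ Suc k) (y i) * g {i})"
          unfolding kz_d_def True by simp
        also have "\<dots> = (\<Sum>i\<in>{1..n}. cf i * (\<Phi> ^^ Suc k) (y i))"
          by (rule sum.cong) (simp_all add: gi mult.commute)
        finally show ?thesis using cf True by (simp add: c_def)
      next
        case False
        have "g (insert i K) = 0" if "i \<notin> K" for i
        proof -
          have "insert i K \<noteq> {j}" for j using False that by auto
          thus ?thesis unfolding g_def by (intro sum.neutral) auto
        qed
        hence l: "kz_d n (zz (Suc k)) g K = 0" unfolding kz_d_def by simp
        have "m (K, True) = 0"
        proof (rule ccontr)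
          assume "m (K, True) \<noteq> 0"
          hence "K \<subseteq> {1..n} \<and> card K + (if True then 1 else 0) = 1" using m unfolding fk_mod_def by blast
          hence "K \<subseteq> {1..n}" "card K = 0" by auto
          moreover have "finite K" using \<open>K \<subseteq> {1..n}\<close> by (rule finite_subset) simp
          ultimately show False using False by simp
        qed
        thus ?thesis using l by simp
      qed
    qed
  qed
qed

lemma stepT:
  assumes m: "m \<in> fk_mod n l" and l: "l \<ge> 1" and cyc: "d m = (\<lambda>_. 0)"
  shows "\<exists>b'\<in>fk_mod n (Suc l). (\<forall>I. b' (I, False) = 0) \<and> (\<forall>K. d b' (K, True) = m (K, True))"
proof -
  obtain D where D: "\<forall>x k. D < k \<longrightarrow> coeff (m x) k = 0" using fk_bound[OF m] by blast
  define h where "h k = (\<lambda>I. coeff (m (I, True)) k)" for k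
  have ex: "\<forall>k. \<exists>g. g \<in> kz_mod n l \<and> kz_d n (zz (Suc k)) g = h k"
  proof
    fix k
    show "\<exists>g. g \<in> kz_mod n l \<and> kz_d n (zz (Suc k)) g = h k"
    proof (cases "l = 1")
      case True
      thus ?thesis using low[of m k] m cyc unfolding h_def by simp
    next
      case False
      hence l2: "l - 1 \<ge> 1" using l by simp
      have hmod: "h k \<in> kz_mod n (l - 1)"
        unfolding kz_mod_def
      proof (intro CollectI allI impI)
        fix I assume "h k I \<noteq> 0"
        hence "m (I, True) \<noteq> 0" unfolding h_def by auto
        thus "I \<subseteq> {1..n} \<and> card I = l - 1" using m unfolding fk_mod_def by fastforce
      qed
      have hcyc: "kz_d n (zz (Suc k)) (h k) = (\<lambda>_. 0)"
      proof
        fix K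
        have "coeff (d m (K, True)) k = kz_d n (zz (Suc k)) (h k) K"
          unfolding coeff_fk_d_T[OF rh] h_def by simp
        thus "kz_d n (zz (Suc k)) (h k) K = 0" using cyc by simp
      qed
      from regk[of "Suc k", unfolded koszul_regular_def, rule_format, OF l2 hmod hcyc]
      obtain g where "g \<in> kz_mod n (Suc (l - 1))" "kz_d n (zz (Suc k)) g = h k" by blast
      moreover have "Suc (l - 1) = l" using l by simp
      ultimately show ?thesis by auto
    qed
  qed
  have big: "\<forall>k>D. (\<lambda>_. 0) \<in> kz_mod n l \<and> kz_d n (zz (Suc k)) (\<lambda>_. 0) = h k"
    using D by (auto simp: zero_kz_mod kz_d_zero_fun h_def)
  obtain G where G: "\<forall>k. G k \<in> kz_mod n l \<and> kz_d n (zz (Suc k)) (G k) = h k" "\<forall>k>D. G k = (\<lambda>_. 0)"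
    using choose_fam[OF ex big] by blast
  define b' where "b' = mkfk True D G"
  have cf: "coeff (b' (I, b)) k = (if b then G k I else 0)" for I b k
    unfolding b'_def using coeff_mkfk[OF G(2)] by simp
  show ?thesis
  proof (intro bexI conjI allI)
    show "b' \<in> fk_mod n (Suc l)" using mkfk_mod[of G n l True D] G(1) unfolding b'_def by simp
    fix I show "b' (I, False) = 0" unfolding b'_def mkfk_def by simp
  next
    fix K
    show "d b' (K, True) = m (K, True)"
    proof (rule poly_eqI)
      fix k
      have "(\<lambda>I. coeff (b' (I, True)) k) = G k" by (rule ext) (simp add: cf)
      thus "coeff (d b' (K, True)) k = coeff (m (K, True)) k"
        using G(1) by (simp add: coeff_fk_d_T[OF rh] h_def)
    qed
  qed
qed

end

lemma skmult_cc:
  assumes rh: "rh \<Phi>"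
  shows "skmult \<Phi> [:r:] [:a:] = [:r * a:]"
proof (rule poly_eqI)
  fix k
  show "coeff (skmult \<Phi> [:r:] [:a:]) k = coeff [:r * a:] k"
    by (simp add: coeff_skmult_const[OF P0[OF rh]] coeff_const1)
qed

lemma skmult_lin1:
  assumes rh: "rh \<Phi>"
  shows "skmult \<Phi> b [:- 1, 1:] = [:- 1, 1:] * b"
proof (rule poly_eqI)
  fix k
  interpret r: rh "\<Phi> ^^ k" by (rule rhP[OF rh])
  have o: "(\<Phi> ^^ j) 1 = 1" for j using rh.one[OF rhP[OF rh]] by blast
  show "coeff (skmult \<Phi> b [:- 1, 1:]) k = coeff ([:- 1, 1:] * b) k"
    unfolding coeff_skmult_lin[OF P0[OF rh]] mult.commute[of "[:- 1, 1:]" b]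
    by (cases k) (simp_all add: r.neg r.one o rh.neg[OF rh] rh.one[OF rh] rh.neg[OF rhP[OF rh]])
qed

lemma sum_const_poly: "(\<Sum>i\<in>A. [:f i:]) = [:(\<Sum>i\<in>A. f i):]"
  by (induction A rule: infinite_finite_induct) simp_all

context fkctx begin

lemma exact_pos:
  assumes m: "m \<in> fk_mod n l" and l: "l \<ge> 1" and cyc: "d m = (\<lambda>_. 0)"
  shows "\<exists>m'\<in>fk_mod n (Suc l). d m' = m"
proof -
  obtain b' where b': "b' \<in> fk_mod n (Suc l)" "\<forall>I. b' (I, False) = 0" "\<forall>K. d b' (K, True) = m (K, True)"
    using stepT[OF m l cyc] by blast
  have db': "d b' \<in> fk_mod n l" using fk_d_mod[OF b'(1)] by simp
  define m'' where "m'' = (\<lambda>x. m x - d b' x)"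
  have m''mod: "m'' \<in> fk_mod n l" unfolding m''_def by (rule fk_mod_diff[OF m db'])
  have m''cyc: "d m'' = (\<lambda>_. 0)"
    using fk_dd[OF rh ty b'(1)] cyc unfolding m''_def fk_d_diff[OF rh] by simp
  have m''T: "\<forall>I. m'' (I, True) = 0" unfolding m''_def using b'(3) by simp
  obtain a' where a': "a' \<in> fk_mod n (Suc l)" "d a' = m''"
    using stepF[OF m''mod l m''cyc m''T] by blast
  show ?thesis
  proof (intro bexI)
    show "(\<lambda>x. a' x + b' x) \<in> fk_mod n (Suc l)" by (rule fk_mod_add[OF a'(1) b'(1)])
    show "d (\<lambda>x. a' x + b' x) = m"
      unfolding fk_d_add[OF rh] a'(2) m''_def by simp
  qed
qed

lemma Jdown: "x \<in> gen_ideal n (zz j) \<Longrightarrow> x \<in> gen_ideal n y"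
proof (induction j)
  case 0 thus ?case by simp
next
  case (Suc j) thus ?case using Jsub by blast
qed

lemma m0:
  assumes m: "m \<in> fk_mod n 0" and ne: "(K, b) \<noteq> ({}, False)"
  shows "m (K, b) = 0"
proof (rule ccontr)
  assume "m (K, b) \<noteq> 0"
  hence "K \<subseteq> {1..n} \<and> card K + (if b then 1 else 0) = 0" using m unfolding fk_mod_def by blast
  moreover hence "finite K" by (intro finite_subset[of K "{1..n}"]) auto
  ultimately show False using ne by (auto split: if_splits)
qed

lemma skact0: "skact \<Phi> p 0 = 0"
  unfolding skact_def using P0[OF rh] by simp

lemma exact0:
  assumes m: "m \<in> fk_mod n 0"
  shows "fk_aug m \<in> gen_ideal n y \<longleftrightarrow> (\<exists>m'\<in>fk_mod n 1. d m' = m)"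
proof
  assume "\<exists>m'\<in>fk_mod n 1. d m' = m"
  then obtain m' where m': "d m' = m" by blast
  have "fk_aug m = poly (d m' ({}, False)) 1" unfolding fk_aug_def m' ..
  also have "\<dots> = (\<Sum>i\<in>{1..n}. skact \<Phi> (m' ({i}, False)) (y i))"
    unfolding fk_d_def by (simp add: poly_sum poly_skmult1[OF rh] skact0)
  finally have e: "fk_aug m = (\<Sum>i\<in>{1..n}. skact \<Phi> (m' ({i}, False)) (y i))" .
  show "fk_aug m \<in> gen_ideal n y"
    unfolding e
  proof (intro gi_sum)
    fix i assume i: "i \<in> {1..n}"
    show "skact \<Phi> (m' ({i}, False)) (y i) \<in> gen_ideal n y"
      unfolding skact_def
    proof (intro gi_sum gi_mult)
      fix j
      have "(\<Phi> ^^ j) (y i) \<in> gen_ideal n (zz j)" using gi_gen[OF i, of "zz j"] by simp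
      thus "(\<Phi> ^^ j) (y i) \<in> gen_ideal n y" by (rule Jdown)
    qed
  qed
next
  assume "fk_aug m \<in> gen_ideal n y"
  then obtain r where r: "poly (m ({}, False)) 1 = (\<Sum>i\<in>{1..n}. r i * y i)"
    unfolding fk_aug_def gen_ideal_def by blast
  define c0 where "c0 = m ({}, False) - [:(\<Sum>i\<in>{1..n}. r i * y i):]"
  have "poly c0 1 = 0" unfolding c0_def using r by simp
  hence "[:- 1, 1:] dvd c0" by (simp add: poly_eq_0_iff_dvd)
  then obtain b where b: "c0 = [:- 1, 1:] * b" by (elim dvdE)
  define m' where "m' = (\<lambda>(I, bb). if bb then (if I = {} then b else 0)
      else (\<Sum>i\<in>{1..n}. if I = {i} then [:r i:] else 0))"
  have m'T: "m' (I, True) = (if I = {} then b else 0)" for I unfolding m'_def by simp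
  have m'F: "m' (I, False) = (\<Sum>i\<in>{1..n}. if I = {i} then [:r i:] else 0)" for I unfolding m'_def by simp
  have m'1: "m' ({i}, False) = [:r i:]" if "i \<in> {1..n}" for i
  proof -
    have "m' ({i}, False) = (\<Sum>j\<in>{1..n}. if j = i then [:r j:] else 0)"
      unfolding m'F by (rule sum.cong) auto
    thus ?thesis using that by simp
  qed
  have m'0: "m' (insert i K, False) = 0" if "K \<noteq> {}" "i \<notin> K" for i K
  proof -
    have "insert i K \<noteq> {j}" for j using that by auto
    thus ?thesis unfolding m'F by (intro sum.neutral) auto
  qed
  show "\<exists>m'\<in>fk_mod n 1. d m' = m"
  proof (intro bexI)
    show "m' \<in> fk_mod n 1"
      unfolding fk_mod_def
    proof (intro CollectI allI impI)
      fix I bb assume nz: "m' (I, bb) \<noteq> 0"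
      show "I \<subseteq> {1..n} \<and> card I + (if bb then 1 else 0) = 1"
      proof (cases bb)
        case True thus ?thesis using nz by (simp add: m'T split: if_splits)
      next
        case False
        have "(\<Sum>i\<in>{1..n}. if I = {i} then [:r i:] else 0) \<noteq> 0" using nz False by (simp add: m'F)
        then obtain i where "i \<in> {1..n}" "I = {i}"
          by (auto dest!: sum_nz split: if_splits)
        thus ?thesis using False by simp
      qed
    qed
  next
    show "d m' = m"
    proof
      fix x :: "nat set \<times> bool"
      obtain K bb where x: "x = (K, bb)" by fastforce
      show "d m' x = m x"
      proof (cases "x = ({}, False)")
        case True
        have "d m' ({}, False) = (\<Sum>i\<in>{1..n}. skmult \<Phi> (m' ({i}, False)) [:y i:]) + skmult \<Phi> b [:- 1, 1:]"
          unfolding fk_d_def by (simp add: m'T)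
        also have "\<dots> = (\<Sum>i\<in>{1..n}. [:r i * y i:]) + [:- 1, 1:] * b"
          by (simp add: m'1 skmult_cc[OF rh] skmult_lin1[OF rh])
        also have "\<dots> = m ({}, False)" unfolding sum_const_poly b[symmetric] c0_def by simp
        finally show ?thesis using True by simp
      next
        case False
        have mx: "m x = 0" using m0[OF m, of K bb] False x by simp
        show ?thesis
        proof (cases bb)
          case True
          have "m' (insert j K, True) = 0" for j by (simp add: m'T)
          thus ?thesis using mx x True unfolding fk_d_def by simp
        next
          case bF: False
          hence Kne: "K \<noteq> {}" using False x by simp
          have "m' (K, True) = 0" using Kne by (simp add: m'T)
          moreover have "\<forall>i\<in>{1..n} - K. m' (insert i K, False) = 0" using m'0[OF Kne] by blast
          ultimately show ?thesis using mx x bF unfolding fk_d_def by simp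
        qed
      qed
    qed
  qed
qed

end

theorem theorem3:
  fixes K :: "'a::comm_ring_1 set"
    and n :: nat
    and y :: "nat \<Rightarrow> 'a"
    and s :: "nat \<Rightarrow> 'a mpoly"
    and \<phi> :: "'a mpoly \<Rightarrow> 'a mpoly"
    and \<psi> :: "'a mpoly \<Rightarrow> 'a"
    and \<Phi> :: "'a \<Rightarrow> 'a"
  assumes noeth: "noetherian_ring TYPE('a)"
    and subring: "is_subring K"
    and phi_hom: "ring_hom_on (poly_ring K n) \<phi>"
    and phi_maps: "\<forall>p\<in>poly_ring K n. \<phi> p \<in> poly_ring K n"
    and phi_K: "\<forall>c\<in>K. \<phi> (mp_const c) = mp_const c"
    and s_in: "\<forall>i\<in>{1..n}. s i \<in> poly_ring K n \<and> s i \<noteq> 0"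
    and phi_var: "\<forall>i\<in>{1..n}. \<phi> (mp_var i) = s i * mp_var i"
    and phi_flat: "flat_hom (poly_ring K n) (poly_ring K n) \<phi>"
    and psi_hom: "ring_hom_on (poly_ring K n) \<psi>"
    and psi_K: "\<forall>c\<in>K. \<psi> (mp_const c) = c"
    and psi_var: "\<forall>i\<in>{1..n}. \<psi> (mp_var i) = y i"
    and Phi_hom: "ring_hom_on UNIV \<Phi>"
    and Phi_K: "\<forall>c\<in>K. \<Phi> c = c"
    and comm: "\<forall>p\<in>poly_ring K n. \<Phi> (\<psi> p) = \<psi> (\<phi> p)"
    and Phi_flat: "flat_hom UNIV UNIV \<Phi>"
    and regular: "koszul_regular n y"
  defines "t \<equiv> (\<lambda>i. \<psi> (s i))"
  shows
    \<comment> \<open>it is a complex\<close>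
    "(\<forall>l. \<forall>m\<in>fk_mod n l. fk_d n \<Phi> y t m \<in> fk_mod n (l - 1) \<and>
                          fk_d n \<Phi> y t (fk_d n \<Phi> y t m) = (\<lambda>_. 0))
     \<comment> \<open>the augmentation is surjective and left A[\<Theta>;\<Phi>]-linear into A/I_n\<close>
     \<and> (\<forall>a. \<exists>m\<in>fk_mod n 0. fk_aug m = (a::'a))
     \<and> (\<forall>c. \<forall>m\<in>fk_mod n 0. fk_aug (\<lambda>b. skmult \<Phi> c (m b)) - skact \<Phi> c (fk_aug m)
                                \<in> gen_ideal n y)
     \<comment> \<open>exactness at FK_0: ker(augmentation) = im \<partial>_1\<close>
     \<and> (\<forall>m\<in>fk_mod n 0. fk_aug m \<in> gen_ideal n y \<longleftrightarrow>
                         (\<exists>m'\<in>fk_mod n 1. fk_d n \<Phi> y t m' = m))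
     \<comment> \<open>exactness at FK_l, l \<ge> 1 (including injectivity of \<partial>_(n+1))\<close>
     \<and> (\<forall>l\<ge>1. \<forall>m\<in>fk_mod n l. fk_d n \<Phi> y t m = (\<lambda>_. 0) \<longrightarrow>
                         (\<exists>m'\<in>fk_mod n (Suc l). fk_d n \<Phi> y t m' = m))"
proof -
  have rh: "rh \<Phi>"
    using Phi_hom unfolding ring_hom_on_def rh_def by blast
  have var_in: "mp_var i \<in> poly_ring K n" if i: "i \<in> {1..n}" for i
    unfolding poly_ring_def mp_var_def
  proof (intro CollectI conjI allI ballI)
    fix mm
    show "Poly_Mapping.lookup (Poly_Mapping.single (Poly_Mapping.single i 1) 1) mm \<in> K"
      using subring unfolding is_subring_def
      by (cases "Poly_Mapping.single i 1 = mm") (simp_all add: lookup_single_not_eq)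
  next
    fix mm assume "mm \<in> Poly_Mapping.keys (Poly_Mapping.single (Poly_Mapping.single i (1::nat)) (1::'a))"
    hence "mm = Poly_Mapping.single i 1" by (simp split: if_splits)
    thus "Poly_Mapping.keys mm \<subseteq> {1..n}" using i by simp
  qed
  have ty: "\<Phi> (y i) = t i * y i" if i: "i \<in> {1..n}" for i
  proof -
    have "\<Phi> (y i) = \<Phi> (\<psi> (mp_var i))" using psi_var i by simp
    also have "\<dots> = \<psi> (\<phi> (mp_var i))" using comm var_in[OF i] by blast
    also have "\<dots> = \<psi> (s i * mp_var i)" using phi_var i by simp
    also have "\<dots> = \<psi> (s i) * \<psi> (mp_var i)"
      using psi_hom s_in var_in[OF i] i unfolding ring_hom_on_def by blast
    also have "\<dots> = t i * y i" using psi_var i unfolding t_def by simp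
    finally show ?thesis .
  qed
  interpret fkctx n \<Phi> y t
    by (rule fkctx.intro[OF rh ty Phi_flat regular])
  show ?thesis
  proof (intro conjI allI ballI impI)
    fix l and m :: "nat set \<times> bool \<Rightarrow> 'a poly" assume m: "m \<in> fk_mod n l"
    show "fk_d n \<Phi> y t m \<in> fk_mod n (l - 1)" by (rule fk_d_mod[OF m])
    show "fk_d n \<Phi> y t (fk_d n \<Phi> y t m) = (\<lambda>_. 0)" by (rule fk_dd[OF rh ty m])
  next
    fix a :: 'a
    define m :: "nat set \<times> bool \<Rightarrow> 'a poly" where "m = (\<lambda>x. if x = ({}, False) then [:a:] else 0)"
    have "m \<in> fk_mod n 0" unfolding fk_mod_def m_def by auto
    moreover have "fk_aug m = a" unfolding fk_aug_def m_def by simp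
    ultimately show "\<exists>m\<in>fk_mod n 0. fk_aug m = a" by blast
  next
    fix c and m :: "nat set \<times> bool \<Rightarrow> 'a poly" assume "m \<in> fk_mod n 0"
    show "fk_aug (\<lambda>b. skmult \<Phi> c (m b)) - skact \<Phi> c (fk_aug m) \<in> gen_ideal n y"
      unfolding fk_aug_def by (simp add: poly_skmult1[OF rh] gi_zero)
  next
    fix m :: "nat set \<times> bool \<Rightarrow> 'a poly" assume "m \<in> fk_mod n 0"
    thus "fk_aug m \<in> gen_ideal n y \<longleftrightarrow> (\<exists>m'\<in>fk_mod n 1. fk_d n \<Phi> y t m' = m)"
      by (rule exact0)
  next
    fix l and m :: "nat set \<times> bool \<Rightarrow> 'a poly"
    assume "1 \<le> l" "m \<in> fk_mod n l" "fk_d n \<Phi> y t m = (\<lambda>_. 0)"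
    thus "\<exists>m'\<in>fk_mod n (Suc l). fk_d n \<Phi> y t m' = m" using exact_pos by blast
  qed
qed

end
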